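(* Let $m\ge2$, let $\mathbf A$ be the $(m-1)\times(m-1)$ tridiagonal matrix with $2$ on the diagonal and $-1$ on the sub- and super-diagonals, and let $\mathbf v=\mathbf A^{-1}\mathbf 1$. Then $v_j=\frac12 j(m-j)$ for $j=1,\dots,m-1$, and the eigenvalue problem $$ \Omega^2\xi_j+v_{j+1}\xi_{j+1}-2v_j\xi_j+v_{j-1}\xi_{j-1}=0,\quad j=1,\dots,m-1, $$ (with $v_0=v_m=0$), i.e. the eigenvalue problem for the matrix $\mathbf A\,\mathrm{diag}(\mathbf v)$, has exactly the $m-1$ simple eigenvalues $\Omega^2\in\{n(n+1)/2:\ n=1,\dots,m-1\}=\{1,3,6,\dots,m(m-1)/2\}$.
   Context: $\mathbf 1=(1,\dots,1)^T\in\mathbb R^{m-1}$. *)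

theory Defs
  imports "Jordan_Normal_Form.Gauss_Jordan_Elimination" "Jordan_Normal_Form.Char_Poly"
begin

(* (m-1)x(m-1) tridiagonal matrix with 2 on the diagonal, -1 on the off-diagonals;
   index i (0-based) corresponds to the paper's index i+1 *)
definition tridiag :: "nat \<Rightarrow> real mat" where
  "tridiag n = mat n n (\<lambda>(i,j). if i = j then 2 else if i = j + 1 \<or> j = i + 1 then -1 else 0)"

end

theory Submission
  imports Defs
begin

definition ext :: "nat \<Rightarrow> real vec \<Rightarrow> nat \<Rightarrow> real" where
  "ext n w j = (if 1 \<le> j \<and> j \<le> n then w $ (j-1) else 0)"

lemma inv_from_kernel:
  fixes M :: "real mat"
  assumes M: "M \<in> carrier_mat n n"
    and K: "\<And>w. w \<in> carrier_vec n \<Longrightarrow> M *\<^sub>v w = 0\<^sub>v n \<Longrightarrow> w = 0\<^sub>v n"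
  shows "\<exists>Mi. mat_inverse M = Some Mi \<and> M * Mi = 1\<^sub>m n \<and> Mi * M = 1\<^sub>m n \<and> Mi \<in> carrier_mat n n"
proof -
  have "det M \<noteq> 0" using det_0_iff_vec_prod_zero_field[OF M] K by blast
  from det_non_zero_imp_unit[OF M this, of "()"]
  have "mat_inverse M \<noteq> None" using mat_inverse(1)[OF M, of "()"] by blast
  then obtain Mi where "mat_inverse M = Some Mi" by auto
  with mat_inverse(2)[OF M this] show ?thesis by blast
qed

lemma tri_mult:
  assumes w: "w \<in> carrier_vec n" and i: "i < n"
  shows "(tridiag n *\<^sub>v w) $ i = 2 * ext n w (i+1) - ext n w i - ext n w (i+2)"
proof -
  have "(tridiag n *\<^sub>v w) $ i = (\<Sum>k\<in>{0..<n}. (tridiag n) $$ (i,k) * w $ k)"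
    using w i by (simp add: tridiag_def scalar_prod_def)
  also have "\<dots> = (\<Sum>k\<in>{0..<n}. (if k = i then 2 * w $ k else 0) + (if k + 1 = i then - w $ k else 0)
      + (if k = i + 1 then - w $ k else 0))"
    using i by (intro sum.cong refl) (auto simp: tridiag_def)
  also have "\<dots> = 2 * ext n w (i+1) - ext n w i - ext n w (i+2)"
  proof (cases i)
    case 0 then show ?thesis using i by (simp add: sum.distrib ext_def)
  next
    case (Suc j)
    have "(\<Sum>k\<in>{0..<n}. (if k + 1 = i then - w $ k else 0)) = (\<Sum>k\<in>{0..<n}. (if k = j then - w $ k else 0))"
      using Suc by (intro sum.cong) auto
    then show ?thesis using i Suc by (simp add: sum.distrib ext_def)
  qed
  finally show ?thesis .
qed
lemma G_expand:
  fixes x :: real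
  shows "(x+1)^k + (x-1)^k - 2*x^k = (\<Sum>e<k. of_nat (k choose e) * (1 + (-1)^(k-e)) * x^e)"
proof -
  have a: "(x+1)^k = (\<Sum>e\<le>k. of_nat (k choose e) * x^e)"
    using binomial_ring[of x 1 k] by simp
  have b: "(x-1)^k = (\<Sum>e\<le>k. of_nat (k choose e) * x^e * (-1)^(k-e))"
    using binomial_ring[of x "-1" k] by simp
  have "(x+1)^k + (x-1)^k = (\<Sum>e\<le>k. of_nat (k choose e) * (1 + (-1)^(k-e)) * x^e)"
    unfolding a b sum.distrib[symmetric] by (intro sum.cong refl) (simp add: algebra_simps)
  also have "\<dots> = (\<Sum>e<k. of_nat (k choose e) * (1 + (-1)^(k-e)) * x^e) + 2 * x^k"
    by (simp add: lessThan_Suc_atMost[symmetric])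
  finally show ?thesis by simp
qed

definition Uf :: "nat \<Rightarrow> nat \<Rightarrow> nat \<Rightarrow> real" where
  "Uf m e d = (if e \<le> d then (of_nat (Suc (Suc d) choose e) * (1 + (-1)^(Suc (Suc d) - e))
       - real m * of_nat (Suc d choose e) * (1 + (-1)^(Suc d - e))) / 2 else 0)"

lemma col_identity:
  fixes x :: real and m n d :: nat
  assumes "d < n"
  defines "vv \<equiv> (\<lambda>y::real. y * (real m - y) / 2)"
  shows "(\<Sum>e<n. x^e * Uf m e d) = -(vv (x+1) * (x+1)^d - 2 * vv x * x^d + vv (x-1) * (x-1)^d)"
proof -
  have L: "(\<Sum>e<n. x^e * Uf m e d) = (\<Sum>e\<le>d. x^e * Uf m e d)"
  proof -
    have "(\<Sum>e<n. x^e * Uf m e d) = (\<Sum>e<n. if e \<in> {..d} then x^e * Uf m e d else 0)"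
      by (intro sum.cong) (auto simp: Uf_def)
    also have "\<dots> = (\<Sum>e\<in>{..<n} \<inter> {..d}. x^e * Uf m e d)"
      by (simp add: sum.inter_restrict)
    also have "{..<n} \<inter> {..d} = {..d}" using assms(1) by auto
    finally show ?thesis .
  qed
  have v: "\<And>y. vv y * y^d = (real m * y^(Suc d) - y^(Suc (Suc d))) / 2"
    by (simp add: vv_def field_simps)
  have R: "-(vv (x+1) * (x+1)^d - 2 * vv x * x^d + vv (x-1) * (x-1)^d)
     = (((x+1)^(Suc (Suc d)) + (x-1)^(Suc (Suc d)) - 2*x^(Suc (Suc d)))
        - real m * ((x+1)^(Suc d) + (x-1)^(Suc d) - 2*x^(Suc d))) / 2"
    unfolding mult.assoc v by (simp add: algebra_simps diff_divide_distrib add_divide_distrib)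
  have G2: "(x+1)^(Suc (Suc d)) + (x-1)^(Suc (Suc d)) - 2*x^(Suc (Suc d))
      = (\<Sum>e\<le>d. of_nat (Suc (Suc d) choose e) * (1 + (-1)^(Suc (Suc d)-e)) * x^e)"
    unfolding G_expand by (simp add: lessThan_Suc_atMost)
  have G1: "(x+1)^(Suc d) + (x-1)^(Suc d) - 2*x^(Suc d)
      = (\<Sum>e\<le>d. of_nat (Suc d choose e) * (1 + (-1)^(Suc d-e)) * x^e)"
    unfolding G_expand by (simp add: lessThan_Suc_atMost)
  show ?thesis unfolding L R G1 G2
    by (simp add: Uf_def sum_divide_distrib sum_distrib_left sum_subtractf[symmetric] algebra_simps)
qed
lemma tridiag_carrier[simp]: "tridiag n \<in> carrier_mat n n"
  by (simp add: tridiag_def)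

lemma tridiag_kernel:
  assumes w: "w \<in> carrier_vec n" and z: "tridiag n *\<^sub>v w = 0\<^sub>v n"
  shows "w = 0\<^sub>v n"
proof -
  define W where "W = ext n w"
  have eq: "\<And>i. i < n \<Longrightarrow> W (i+2) = 2 * W (i+1) - W i"
  proof -
    fix i assume i: "i < n"
    have "(tridiag n *\<^sub>v w) $ i = 0" using z i by simp
    then show "W (i+2) = 2 * W (i+1) - W i" using tri_mult[OF w i] unfolding W_def by simp
  qed
  have W0: "W 0 = 0" by (simp add: W_def ext_def)
  have WS: "W (Suc n) = 0" by (simp add: W_def ext_def)
  have ind: "\<And>j. j \<le> n \<longrightarrow> W j = real j * W 1 \<and> W (Suc j) = real (Suc j) * W 1"
  proof -
    fix j show "j \<le> n \<longrightarrow> W j = real j * W 1 \<and> W (Suc j) = real (Suc j) * W 1"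
    proof (induction j)
      case 0 then show ?case using W0 by simp
    next
      case (Suc j)
      show ?case
      proof
        assume "Suc j \<le> n"
        then have "j < n" by simp
        then show "W (Suc j) = real (Suc j) * W 1 \<and> W (Suc (Suc j)) = real (Suc (Suc j)) * W 1"
          using eq[OF \<open>j < n\<close>] Suc.IH by (simp add: algebra_simps)
      qed
    qed
  qed
  have "W (Suc n) = real (Suc n) * W 1" using ind[of n] by simp
  with WS have W1: "W 1 = 0" by simp
  show ?thesis
  proof (rule eq_vecI)
    fix i assume "i < dim_vec (0\<^sub>v n)"
    then have i: "i < n" by simp
    have "w $ i = W (Suc i)" using i by (simp add: W_def ext_def)
    also have "\<dots> = 0" using ind[of i] i W1 by simp
    finally show "w $ i = 0\<^sub>v n $ i" using i by simp
  qed (use w in simp)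
qed

lemma tridiag_v0:
  fixes n :: nat
  defines "v0 \<equiv> vec n (\<lambda>i. real (i+1) * (real (Suc n) - real (i+1)) / 2)"
  shows "tridiag n *\<^sub>v v0 = vec n (\<lambda>_. 1)"
proof (rule eq_vecI)
  have c: "v0 \<in> carrier_vec n" by (simp add: v0_def)
  have e: "\<And>j. j \<le> Suc n \<Longrightarrow> ext n v0 j = real j * (real (Suc n) - real j) / 2"
    by (auto simp: ext_def v0_def of_nat_diff)
  fix i assume "i < dim_vec (vec n (\<lambda>_. 1::real))"
  then have i: "i < n" by simp
  show "(tridiag n *\<^sub>v v0) $ i = vec n (\<lambda>_. 1) $ i"
    unfolding tri_mult[OF c i] using i by (simp add: e field_simps)
qed (simp add: tridiag_def)

lemma diag_mult_vec:
  assumes w: "w \<in> carrier_vec n"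
  shows "mat_diag n f *\<^sub>v w = vec n (\<lambda>j. f j * w $ j)"
proof (rule eq_vecI)
  fix i assume "i < dim_vec (vec n (\<lambda>j. f j * w $ j))"
  then have i: "i < n" by simp
  have "(mat_diag n f *\<^sub>v w) $ i = (\<Sum>k\<in>{0..<n}. (if i = k then f k else 0) * w $ k)"
    using w i by (auto simp: mat_diag_def scalar_prod_def intro!: sum.cong)
  also have "\<dots> = (\<Sum>k\<in>{0..<n}. (if k = i then f i * w $ k else 0))"
    by (intro sum.cong) auto
  also have "\<dots> = f i * w $ i" using i by simp
  finally show "(mat_diag n f *\<^sub>v w) $ i = vec n (\<lambda>j. f j * w $ j) $ i" using i by simp
qed (simp add: mat_diag_def)

definition Pm :: "nat \<Rightarrow> real mat" where
  "Pm n = mat n n (\<lambda>(i,d). real (Suc i) ^ d)"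

lemma Pm_kernel:
  assumes c: "c \<in> carrier_vec n" and z: "Pm n *\<^sub>v c = 0\<^sub>v n"
  shows "c = 0\<^sub>v n"
proof -
  define p where "p = (\<Sum>d<n. monom (c $ d) d)"
  have coeff: "\<And>k. coeff p k = (if k < n then c $ k else 0)"
    by (simp add: p_def coeff_sum)
  have pe: "\<And>x. poly p x = (\<Sum>d<n. c $ d * x ^ d)"
    by (simp add: p_def poly_sum poly_monom)
  have roots: "\<And>i. i < n \<Longrightarrow> poly p (real (Suc i)) = 0"
  proof -
    fix i assume i: "i < n"
    have "(Pm n *\<^sub>v c) $ i = 0" using z i by simp
    then show "poly p (real (Suc i)) = 0"
      using i c by (simp add: Pm_def pe scalar_prod_def lessThan_atLeast0 mult.commute)
  qed
  have p0: "p = 0"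
  proof (rule ccontr)
    assume np: "p \<noteq> 0"
    have "(\<lambda>i. real (Suc i)) ` {..<n} \<subseteq> {x. poly p x = 0}" using roots by auto
    moreover have "card ((\<lambda>i. real (Suc i)) ` {..<n}) = n"
      by (subst card_image) (auto simp: inj_on_def)
    ultimately have "n \<le> card {x. poly p x = 0}"
      using card_mono[OF poly_roots_finite[OF np]] by metis
    also have "\<dots> \<le> degree p" by (rule card_poly_roots_bound[OF np])
    finally have nd: "n \<le> degree p" .
    have "coeff p (degree p) \<noteq> 0" using np by simp
    with coeff nd show False by auto
  qed
  show ?thesis
  proof (rule eq_vecI)
    fix i assume "i < dim_vec (0\<^sub>v n)"
    then have i: "i < n" by simp
    show "c $ i = 0\<^sub>v n $ i" using coeff[of i] p0 i by simp
  qed (use c in simp)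
qed
lemma choose_diag: "real (Suc (Suc d) choose d) = real ((d+1)*(d+2)) / 2"
proof -
  have "2 * (Suc (Suc d) choose d) = (d+1)*(d+2)"
    by (induction d) (auto simp: algebra_simps)
  then have "real (2 * (Suc (Suc d) choose d)) = real ((d+1)*(d+2))" by metis
  then show ?thesis by simp
qed

lemma Uf_diag: "Uf m d d = real ((d+1)*(d+2)) / 2"
  using choose_diag[of d] by (simp add: Uf_def)

lemma lam_inj: "real ((d+1)*(d+2)) / 2 = real ((d'+1)*(d'+2)) / 2 \<longleftrightarrow> d = (d'::nat)"
proof
  assume h: "real ((d+1)*(d+2)) / 2 = real ((d'+1)*(d'+2)) / 2"
  then have "real ((d+1)*(d+2)) = real ((d'+1)*(d'+2))" by linarith
  then have e: "(d+1)*(d+2) = (d'+1)*(d'+2)" by (simp only: of_nat_eq_iff)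
  show "d = d'"
  proof (rule ccontr)
    assume "d \<noteq> d'"
    then consider "d < d'" | "d' < d" by linarith
    then show False
    proof cases
      case 1 then have "(d+1)*(d+2) < (d'+1)*(d'+2)" by (intro mult_strict_mono) auto
      with e show False by simp
    next
      case 2 then have "(d'+1)*(d'+2) < (d+1)*(d+2)" by (intro mult_strict_mono) auto
      with e show False by simp
    qed
  qed
qed simp

theorem mainTheorem7:
  fixes m :: nat
  assumes "m \<ge> 2"
  defines "A \<equiv> tridiag (m - 1)"
  defines "v \<equiv> the (mat_inverse A) *\<^sub>v vec (m - 1) (\<lambda>_. 1)"
  defines "B \<equiv> A * mat_diag (m - 1) (\<lambda>j. v $ j)"
  shows "invertible_mat A
    \<and> dim_vec v = m - 1
    \<and> (\<forall>j < m - 1. v $ j = real (j + 1) * (real m - real (j + 1)) / 2)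
    \<and> {\<Omega>. eigenvalue B \<Omega>} = {real (k * (k + 1)) / 2 | k. 1 \<le> k \<and> k \<le> m - 1}
    \<and> (\<forall>\<Omega>. eigenvalue B \<Omega> \<longrightarrow> order \<Omega> (char_poly B) = 1)"
proof -
  obtain n where mn: "m = Suc n" and n1: "n \<ge> 1" using assms(1) by (cases m) auto
  have Adef: "A = tridiag n" using mn A_def by simp
  have Ac: "A \<in> carrier_mat n n" unfolding Adef by simp
  obtain Ai where Ai: "mat_inverse A = Some Ai" "A * Ai = 1\<^sub>m n" "Ai * A = 1\<^sub>m n" "Ai \<in> carrier_mat n n"
    using inv_from_kernel[OF Ac] tridiag_kernel unfolding Adef by blast
  have invA: "invertible_mat A"
    unfolding invertible_mat_def inverts_mat_def square_mat.simps using Ai Ac by auto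
  define v0 where "v0 = vec n (\<lambda>i. real (i+1) * (real (Suc n) - real (i+1)) / 2)"
  have v0c: "v0 \<in> carrier_vec n" by (simp add: v0_def)
  have "v = Ai *\<^sub>v (A *\<^sub>v v0)"
    unfolding v_def Ai(1) using tridiag_v0[of n] unfolding v0_def Adef mn by simp
  also have "\<dots> = (Ai * A) *\<^sub>v v0" using Ai(4) Ac v0c by (simp add: assoc_mult_mat_vec)
  also have "\<dots> = v0" using Ai(3) v0c by simp
  finally have vv0: "v = v0" .
  have dimv: "dim_vec v = m - 1" using vv0 mn by (simp add: v0_def)
  have vals: "\<forall>j < m - 1. v $ j = real (j + 1) * (real m - real (j + 1)) / 2"
    using vv0 mn by (simp add: v0_def)
  define D where "D = mat_diag n (\<lambda>j. v $ j)"
  have Bdef: "B = A * D" unfolding B_def D_def mn by simp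
  have Dc: "D \<in> carrier_mat n n" by (simp add: D_def)
  have Bc: "B \<in> carrier_mat n n" using Ac Dc Bdef by simp
  define P where "P = Pm n"
  have Pc: "P \<in> carrier_mat n n" by (simp add: P_def Pm_def)
  obtain Pi where Pi: "P * Pi = 1\<^sub>m n" "Pi * P = 1\<^sub>m n" "Pi \<in> carrier_mat n n"
    using inv_from_kernel[OF Pc] Pm_kernel unfolding P_def by blast
  define U where "U = mat n n (\<lambda>(e,d). Uf m e d)"
  have Uc: "U \<in> carrier_mat n n" by (simp add: U_def)
  define vv where "vv = (\<lambda>y::real. y * (real m - y) / 2)"
  have BP: "B * P = P * U"
  proof (rule eq_matI)
    fix i d assume "i < dim_row (P * U)" "d < dim_col (P * U)"
    then have i: "i < n" and d: "d < n" using Pc Uc by auto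
    define c where "c = col P d"
    have cc: "c \<in> carrier_vec n" using Pc d by (simp add: c_def)
    have cval: "\<And>j. j < n \<Longrightarrow> c $ j = real (Suc j) ^ d" using d by (simp add: c_def P_def Pm_def)
    define w where "w = vec n (\<lambda>j. v $ j * c $ j)"
    have wc: "w \<in> carrier_vec n" by (simp add: w_def)
    have Y: "(B * P) $$ (i,d) = 2 * ext n w (i+1) - ext n w i - ext n w (i+2)"
    proof -
    have "(B * P) $$ (i,d) = (B *\<^sub>v c) $ i" using i d Bc Pc by (simp add: c_def)
    also have "B *\<^sub>v c = A *\<^sub>v (D *\<^sub>v c)" unfolding Bdef using Ac Dc cc by (simp add: assoc_mult_mat_vec)
    also have "D *\<^sub>v c = w" unfolding D_def w_def using diag_mult_vec[OF cc] by simp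
    also have "(A *\<^sub>v w) $ i = 2 * ext n w (i+1) - ext n w i - ext n w (i+2)"
      unfolding Adef by (rule tri_mult[OF wc i])
    finally show ?thesis .
    qed
    have ew: "\<And>j. j \<le> Suc n \<Longrightarrow> ext n w j = vv (real j) * real j ^ d"
      by (auto simp: ext_def w_def vv0 v0_def cval vv_def mn of_nat_diff)
    have "2 * ext n w (i+1) - ext n w i - ext n w (i+2) =
       2 * (vv (real (i+1)) * real (i+1) ^ d) - vv (real i) * real i ^ d - vv (real (i+2)) * real (i+2) ^ d"
      using i by (simp add: ew)
    also have "2 * (vv (real (i+1)) * real (i+1) ^ d) - vv (real i) * real i ^ d - vv (real (i+2)) * real (i+2) ^ d
       = -(vv (real (Suc i) + 1) * (real (Suc i) + 1)^d - 2 * vv (real (Suc i)) * (real (Suc i))^d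
           + vv (real (Suc i) - 1) * (real (Suc i) - 1)^d)"
      by (simp add: algebra_simps)
    also have "\<dots> = (\<Sum>e<n. real (Suc i) ^ e * Uf m e d)"
      unfolding vv_def by (rule col_identity[OF d, symmetric])
    also have "\<dots> = (P * U) $$ (i,d)"
      using i d Pc Uc by (simp add: P_def Pm_def U_def scalar_prod_def lessThan_atLeast0)
    finally have X: "2 * ext n w (i+1) - ext n w i - ext n w (i+2) = (P * U) $$ (i,d)" .
    show "(B * P) $$ (i,d) = (P * U) $$ (i,d)" unfolding Y X ..
  qed (use Bc Pc Uc in auto)
  have "P * U * Pi = B * P * Pi" using BP by simp
  also have "\<dots> = B * (P * Pi)" using Bc Pc Pi(3) by (simp add: assoc_mult_mat)
  also have "\<dots> = B" using Pi(1) Bc by simp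
  finally have "B = P * U * Pi" by simp
  then have sim: "similar_mat B U"
    by (intro similar_matI[of B U P Pi n]) (use Bc Uc Pc Pi in auto)
  have ut: "upper_triangular U" by (simp add: upper_triangular_def U_def Uf_def)
  define lam where "lam = (\<lambda>d::nat. real ((d+1)*(d+2)) / 2)"
  have diagU: "diag_mat U = map lam [0..<n]"
    by (simp add: diag_mat_def U_def Uf_diag lam_def)
  have cp: "char_poly B = prod_list (map (\<lambda>d. [:- lam d, 1:]) [0..<n])"
    unfolding char_poly_similar[OF sim] char_poly_upper_triangular[OF Uc ut] diagU
    by (simp add: o_def)
  have eig: "\<And>\<Omega>. eigenvalue B \<Omega> \<longleftrightarrow> (\<exists>d<n. \<Omega> = lam d)"
    unfolding eigenvalue_root_char_poly[OF Bc] cp poly_prod_list_zero_iff by auto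
  have set_eq: "{\<Omega>. eigenvalue B \<Omega>} = {real (k * (k + 1)) / 2 | k. 1 \<le> k \<and> k \<le> m - 1}"
  proof (rule Set.set_eqI, rule iffI)
    fix \<Omega> assume "\<Omega> \<in> {\<Omega>. eigenvalue B \<Omega>}"
    then obtain d where "d < n" "\<Omega> = lam d" using eig by auto
    then show "\<Omega> \<in> {real (k * (k + 1)) / 2 | k. 1 \<le> k \<and> k \<le> m - 1}"
      by (intro CollectI exI[of _ "Suc d"]) (auto simp: lam_def mn algebra_simps)
  next
    fix \<Omega> assume "\<Omega> \<in> {real (k * (k + 1)) / 2 | k. 1 \<le> k \<and> k \<le> m - 1}"
    then obtain k where k: "1 \<le> k" "k \<le> n" "\<Omega> = real (k * (k + 1)) / 2" using mn by auto
    then have "k - 1 < n" "\<Omega> = lam (k - 1)" by (auto simp: lam_def algebra_simps of_nat_diff)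
    then show "\<Omega> \<in> {\<Omega>. eigenvalue B \<Omega>}" using eig by blast
  qed
  have ord: "\<forall>\<Omega>. eigenvalue B \<Omega> \<longrightarrow> order \<Omega> (char_poly B) = 1"
  proof (intro allI impI)
    fix \<Omega> assume "eigenvalue B \<Omega>"
    then obtain d0 where d0: "d0 < n" "\<Omega> = lam d0" using eig by auto
    have "order \<Omega> (char_poly B) = sum_list (map (order \<Omega>) (map (\<lambda>d. [:- lam d, 1:]) [0..<n]))"
      unfolding cp by (rule order_prod_list) auto
    also have "\<dots> = (\<Sum>d\<in>{0..<n}. if lam d = lam d0 then 1 else 0)"
      by (simp add: o_def sum_list_distinct_conv_sum_set order_linear' d0)
    also have "\<dots> = (\<Sum>d\<in>{0..<n}. if d = d0 then 1 else 0)"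
      by (intro sum.cong refl) (simp only: lam_def lam_inj)
    also have "\<dots> = 1" using d0 by simp
    finally show "order \<Omega> (char_poly B) = 1" .
  qed
  show ?thesis using invA dimv vals set_eq ord by blast
qed
end
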